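(* In the longitudinal random intercept setting described in the context, suppose that $N$, $T$, $\widetilde{\alpha}$, $1-\alpha$, $\psi$ and $\rho$ are fixed, and let $(\widehat{\sigma}_\varepsilon,\widehat{\sigma}_\mu)$ be any one of the three pairs of estimators listed in the context. Then the scaled expected length $$ \frac{ z_{1-\alpha/2}}{\Phi^{-1}((c^*+1)/2)} \cdot \frac{ E \left( (\widehat{\sigma}_{\varepsilon}/\sigma_{\varepsilon}) \left( \sum_{i=1}^N \sum_{t=1}^T (u_{it} - \overline{u}_i)^2 \right)^{-1/2} \left( \widehat{w}^{1/2}\, \mathcal{I}(\mathcal{B}) + \mathcal{I}(\mathcal{B}^c) \right) \right)}{E \left( (\widehat{\sigma}_{\varepsilon}/\sigma_{\varepsilon}) \left( \sum_{i=1}^N \sum_{t=1}^T (u_{it} - \overline{u}_i)^2 \right)^{-1/2} \right)} $$ is an even function of $\tau\in(-1,1)$.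
   Context: Model: for $i=1,\dots,N$ and $t=1,\dots,T$, $y_{it} = a + \beta x_{it} + \mu_i + \varepsilon_{it}$, where the $\varepsilon_{it}$ are i.i.d. $N(0,\sigma_\varepsilon^2)$, independent of the vectors $(\mu_i, x_{i1},\dots,x_{iT})$, $i=1,\dots,N$, which are i.i.d. multivariate normal with mean zero and covariance matrix $\begin{bmatrix}\sigma_\mu^2 & \widetilde{\tau}\sigma_\mu\sigma_x e^{\prime}\\ \widetilde{\tau}\sigma_\mu\sigma_x e & \sigma_x^2 G\end{bmatrix}$, with $e$ the $T$-vector of ones and $G$ the $T\times T$ matrix with 1's on the diagonal and $\rho$ off the diagonal. Here $\sigma_\varepsilon,\sigma_\mu,\sigma_x>0$. The non-exogeneity parameter is $\tau = \widetilde{\tau}\,(T/(1+(T-1)\rho))^{1/2}\in(-1,1)$ (it equals $\mathrm{Corr}(\mu_i,\overline{x}_i)$), and $\psi=\sigma_\mu/\sigma_\varepsilon$. The covariates are represented as $x_{it}/\sigma_x = (1-\rho)^{1/2}u_{it} + \rho^{1/2}v_i$, where $\rho\in[0,1)$ and $u_{11},\dots,u_{NT},v_1,\dots,v_N$ are i.i.d. $N(0,1)$, independent of the $\varepsilon_{it}$; $\mu_i$ is generated from its conditional distribution given $(x_{i1},\dots,x_{iT})$. $x$ denotes the vector of all $x_{it}$; $\overline{u}_i=T^{-1}\sum_t u_{it}$. Notation: $\overline{y}_i = T^{-1}\sum_t y_{it}$, $\overline{x}_i=T^{-1}\sum_t x_{it}$, $\overline{x}=(NT)^{-1}\sum_{i,t}x_{it}$,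 $\overline{y}=(NT)^{-1}\sum_{i,t}y_{it}$, $\mathrm{SSB}=\sum_i(\overline{x}_i-\overline{x})^2$, $\mathrm{SSW}=\sum_{i,t}(x_{it}-\overline{x}_i)^2$, $r(x)=\mathrm{SSB}/\mathrm{SSW}$, $q(\psi,T)=\psi^2+1/T$, $z_c=\Phi^{-1}(c)$ with $\Phi$ the $N(0,1)$ cdf, $\mathcal{I}(\mathcal{A})$ is 1 if statement $\mathcal{A}$ is true and 0 otherwise. Estimators of $\beta$: $\widetilde{\beta}_W = \sum_{i,t}(x_{it}-\overline{x}_i)(y_{it}-\overline{y}_i)/\mathrm{SSW}$ (OLS in the fixed effects model $y_{it}-\overline{y}_i=\beta(x_{it}-\overline{x}_i)+(\varepsilon_{it}-\overline{\varepsilon}_i)$), $\mathrm{Var}(\widetilde{\beta}_W\mid x)=\sigma_\varepsilon^2/\mathrm{SSW}$; $\widetilde{\beta}_B=\sum_i(\overline{x}_i-\overline{x})(\overline{y}_i-\overline{y})/\mathrm{SSB}$ (OLS slope in the between model $\overline{y}_i=a+\beta\overline{x}_i+\mu_i+\overline{\varepsilon}_i$), $\mathrm{Var}_0(\widetilde{\beta}_B\mid x)=(\sigma_\mu^2+\sigma_\varepsilon^2/T)/\mathrm{SSB}$; GLS estimator (random intercept model with $\tau=0$) $\widehat{\beta}(\psi)=\big(\mathrm{SSW}\,\widetilde{\beta}_W + (\mathrm{SSB}/q(\psi,T))\widetilde{\beta}_B\big)/\big(\mathrm{SSW}+\mathrm{SSB}/q(\psi,T)\big)$, $\mathrm{Var}_0(\widehat{\beta}(\psi)\mid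 x)=\sigma_\varepsilon^2/(\mathrm{SSW}+\mathrm{SSB}/q(\psi,T))$. Estimator pairs $(\widehat{\sigma}_\varepsilon^2,\widehat{\sigma}_\mu^2)$: (1) unbiased-type: $\widehat{\sigma}_\varepsilon^2=\frac{1}{N(T-1)-1}\sum_{i,t}r_{it}^2$ and $\widehat{\sigma}_\mu^2=\max(0,\frac{1}{N-2}\sum_i\overline{r}_i^2-\frac{1}{NT(T-1)-T}\sum_{i,t}r_{it}^2)$, where $r_{it}$ are the OLS residuals of the fixed effects model and $\overline{r}_i$ the OLS residuals of the between model; (2) Hsiao's maximum likelihood estimators of $\sigma_\varepsilon^2,\sigma_\mu^2$ in the Gaussian random intercept model (with $\tau=0$), maximizing the log-likelihood subject to $\sigma_\varepsilon^2\ge0,\sigma_\mu^2\ge0$; (3) Wooldridge's estimators: $\widehat{\sigma}_\varepsilon^2=\max(-\epsilon\widetilde{\sigma}_\varepsilon^2,\widetilde{\sigma}_\varepsilon^2)$ with $\epsilon$ a very small positive number and $\widetilde{\sigma}_\varepsilon^2=\frac{1}{NT-K}\sum_{i,t}\tilde{r}_{it}^2-\frac{1}{NT(T-1)/2-K}\sum_i\sum_{t=1}^{T-1}\sum_{s=t+1}^T\tilde{r}_{it}\tilde{r}_{is}$, and $\widehat{\sigma}_\mu^2=\max(0,\frac{1}{NT(T-1)/2-K}\sum_i\sum_{t=1}^{T-1}\sum_{s=t+1}^T\tilde{r}_{it}\tilde{r}_{is})$, where $\tilde{r}_{it}$ are the residuals from pooled OLS of $y_{it}$ on an intercept and $x_{it}$,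 and $K\in\{0,2\}$. $\widehat{\sigma}_\varepsilon,\widehat{\sigma}_\mu$ are the nonnegative square roots and $\widehat{\psi}=\widehat{\sigma}_\mu/\widehat{\sigma}_\varepsilon$. Two-stage interval: Hausman statistic $H(\sigma_\varepsilon,\sigma_\mu)=(\widetilde{\beta}_W-\widetilde{\beta}_B)^2/\big(\mathrm{Var}(\widetilde{\beta}_W\mid x)+\mathrm{Var}_0(\widetilde{\beta}_B\mid x)\big)$. If $H\le z^2_{1-\widetilde{\alpha}/2}$ the interval $K(\sigma_\varepsilon,\sigma_\mu)$ is $[\widehat{\beta}(\psi)\pm z_{1-\alpha/2}(\mathrm{Var}_0(\widehat{\beta}(\psi)\mid x))^{1/2}]$, otherwise it is $[\widetilde{\beta}_W\pm z_{1-\alpha/2}\sigma_\varepsilon/\mathrm{SSW}^{1/2}]$. $K(\widehat{\sigma}_\varepsilon,\widehat{\sigma}_\mu)$ replaces $\sigma_\varepsilon,\sigma_\mu,\psi$ by $\widehat{\sigma}_\varepsilon,\widehat{\sigma}_\mu,\widehat{\psi}$ throughout. $\mathcal{B}$ is the statement $H(\widehat{\sigma}_\varepsilon,\widehat{\sigma}_\mu)\le z^2_{1-\widetilde{\alpha}/2}$; $\widehat{w}=q(\widehat{\psi},T)/(q(\widehat{\psi},T)+r(x))$. Adjustment constant: for a fixed $\widetilde{\rho}\in(0,1)$, $c_{\min}$ is $P(\beta\in K(\widehat{\sigma}_\varepsilon,\widehat{\sigma}_\mu))$ minimized over $\tau\in(-1,1)$, $\psi\in(0,\infty)$, $\rho\in[0,\widetilde{\rho}]$;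 for $c\in(0,1)$, $J_c(\widehat{\sigma}_\varepsilon)=[\widetilde{\beta}_W\pm\Phi^{-1}((c+1)/2)\widehat{\sigma}_\varepsilon/\mathrm{SSW}^{1/2}]$; $c^*$ is the value of $c$ with $P(\beta\in J_c(\widehat{\sigma}_\varepsilon))=c_{\min}$. *)

theory Defs
  imports "HOL-Probability.Probability"
begin

definition std_normal :: "real measure" where
  "std_normal = density lborel std_normal_density"

definition Phi :: "real \<Rightarrow> real" where
  "Phi x = measure std_normal {..x}"

definition Phi_inv :: "real \<Rightarrow> real" where
  "Phi_inv c = (THE z. Phi z = c)"

text \<open>Indices i range over 0..N-1 and t over 0..T-1. The variable w_i is the
  standard normal innovation used to generate mu_i from its conditional
  distribution given (x_i1,...,x_iT); eps_it is the standardised error.\<close>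

datatype nidx = U nat nat | V nat | W nat | Eps nat nat

definition idxs :: "nat \<Rightarrow> nat \<Rightarrow> nidx set" where
  "idxs N T = {U i t | i t. i < N \<and> t < T} \<union> {V i | i. i < N} \<union> {W i | i. i < N}
              \<union> {Eps i t | i t. i < N \<and> t < T}"

definition sample_space :: "nat \<Rightarrow> nat \<Rightarrow> (nidx \<Rightarrow> real) measure" where
  "sample_space N T = PiM (idxs N T) (\<lambda>_. std_normal)"

definition model_x :: "real \<Rightarrow> real \<Rightarrow> (nidx \<Rightarrow> real) \<Rightarrow> nat \<Rightarrow> nat \<Rightarrow> real" where
  "model_x sx rho \<omega> i t = sx * (sqrt (1 - rho) * \<omega> (U i t) + sqrt rho * \<omega> (V i))"

definition tau_tilde :: "nat \<Rightarrow> real \<Rightarrow> real \<Rightarrow> real" where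
  "tau_tilde T rho tau = tau * sqrt ((1 + (real T - 1) * rho) / real T)"

text \<open>mu_i drawn from its conditional normal distribution given x_i:
  mean = tau_tilde sigma_mu sigma_x e' (sigma_x^2 G)^(-1) x_i
       = tau_tilde (sigma_mu/sigma_x) (sum_t x_it) / (1+(T-1)rho),
  variance = sigma_mu^2 (1 - tau_tilde^2 T/(1+(T-1)rho)).\<close>
definition model_mu ::
  "nat \<Rightarrow> real \<Rightarrow> real \<Rightarrow> real \<Rightarrow> real \<Rightarrow> real \<Rightarrow> (nidx \<Rightarrow> real) \<Rightarrow> nat \<Rightarrow> real" where
  "model_mu T se sx psi rho tau \<omega> i =
     (let smu = psi * se; tt = tau_tilde T rho tau; g = 1 + (real T - 1) * rho in
      tt * (smu / sx) * (\<Sum>t<T. model_x sx rho \<omega> i t) / g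
      + smu * sqrt (1 - tt\<^sup>2 * real T / g) * \<omega> (W i))"

definition model_y ::
  "nat \<Rightarrow> real \<Rightarrow> real \<Rightarrow> real \<Rightarrow> real \<Rightarrow> real \<Rightarrow> real \<Rightarrow> real \<Rightarrow> (nidx \<Rightarrow> real) \<Rightarrow> nat \<Rightarrow> nat \<Rightarrow> real" where
  "model_y T a b se sx psi rho tau \<omega> i t =
     a + b * model_x sx rho \<omega> i t + model_mu T se sx psi rho tau \<omega> i + se * \<omega> (Eps i t)"

definition mean_i :: "nat \<Rightarrow> (nat \<Rightarrow> nat \<Rightarrow> real) \<Rightarrow> nat \<Rightarrow> real" where
  "mean_i T x i = (\<Sum>t<T. x i t) / real T"

definition mean_all :: "nat \<Rightarrow> nat \<Rightarrow> (nat \<Rightarrow> nat \<Rightarrow> real) \<Rightarrow> real" where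
  "mean_all N T x = (\<Sum>i<N. \<Sum>t<T. x i t) / (real N * real T)"

definition SSB :: "nat \<Rightarrow> nat \<Rightarrow> (nat \<Rightarrow> nat \<Rightarrow> real) \<Rightarrow> real" where
  "SSB N T x = (\<Sum>i<N. (mean_i T x i - mean_all N T x)\<^sup>2)"

definition SSW :: "nat \<Rightarrow> nat \<Rightarrow> (nat \<Rightarrow> nat \<Rightarrow> real) \<Rightarrow> real" where
  "SSW N T x = (\<Sum>i<N. \<Sum>t<T. (x i t - mean_i T x i)\<^sup>2)"

definition r_ratio :: "nat \<Rightarrow> nat \<Rightarrow> (nat \<Rightarrow> nat \<Rightarrow> real) \<Rightarrow> real" where
  "r_ratio N T x = SSB N T x / SSW N T x"

definition qf :: "real \<Rightarrow> nat \<Rightarrow> real" where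
  "qf psi T = psi\<^sup>2 + 1 / real T"

definition betaW :: "nat \<Rightarrow> nat \<Rightarrow> (nat \<Rightarrow> nat \<Rightarrow> real) \<Rightarrow> (nat \<Rightarrow> nat \<Rightarrow> real) \<Rightarrow> real" where
  "betaW N T x y = (\<Sum>i<N. \<Sum>t<T. (x i t - mean_i T x i) * (y i t - mean_i T y i)) / SSW N T x"

definition betaB :: "nat \<Rightarrow> nat \<Rightarrow> (nat \<Rightarrow> nat \<Rightarrow> real) \<Rightarrow> (nat \<Rightarrow> nat \<Rightarrow> real) \<Rightarrow> real" where
  "betaB N T x y = (\<Sum>i<N. (mean_i T x i - mean_all N T x) * (mean_i T y i - mean_all N T y)) / SSB N T x"

definition beta_gls :: "nat \<Rightarrow> nat \<Rightarrow> real \<Rightarrow> (nat \<Rightarrow> nat \<Rightarrow> real) \<Rightarrow> (nat \<Rightarrow> nat \<Rightarrow> real) \<Rightarrow> real" where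
  "beta_gls N T psi x y =
     (SSW N T x * betaW N T x y + (SSB N T x / qf psi T) * betaB N T x y)
     / (SSW N T x + SSB N T x / qf psi T)"

definition fe_res :: "nat \<Rightarrow> nat \<Rightarrow> (nat \<Rightarrow> nat \<Rightarrow> real) \<Rightarrow> (nat \<Rightarrow> nat \<Rightarrow> real) \<Rightarrow> nat \<Rightarrow> nat \<Rightarrow> real" where
  "fe_res N T x y i t = (y i t - mean_i T y i) - betaW N T x y * (x i t - mean_i T x i)"

definition be_res :: "nat \<Rightarrow> nat \<Rightarrow> (nat \<Rightarrow> nat \<Rightarrow> real) \<Rightarrow> (nat \<Rightarrow> nat \<Rightarrow> real) \<Rightarrow> nat \<Rightarrow> real" where
  "be_res N T x y i = (mean_i T y i - mean_all N T y) - betaB N T x y * (mean_i T x i - mean_all N T x)"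

definition est_unbiased :: "nat \<Rightarrow> nat \<Rightarrow> (nat \<Rightarrow> nat \<Rightarrow> real) \<Rightarrow> (nat \<Rightarrow> nat \<Rightarrow> real) \<Rightarrow> real \<times> real" where
  "est_unbiased N T x y =
     (let S = (\<Sum>i<N. \<Sum>t<T. (fe_res N T x y i t)\<^sup>2) in
      (S / (real N * (real T - 1) - 1),
       max 0 ((\<Sum>i<N. (be_res N T x y i)\<^sup>2) / (real N - 2)
              - S / (real N * real T * (real T - 1) - real T))))"

text \<open>Gaussian log-likelihood of the random intercept model (tau = 0):
  y_i ~ N(a e + b x_i, s I + m e e'), with det = s^(T-1) (s + T m) and
  inverse (1/s)(I - m/(s+Tm) e e').\<close>
definition loglik :: "nat \<Rightarrow> nat \<Rightarrow> (nat \<Rightarrow> nat \<Rightarrow> real) \<Rightarrow> (nat \<Rightarrow> nat \<Rightarrow> real)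
                      \<Rightarrow> real \<Rightarrow> real \<Rightarrow> real \<Rightarrow> real \<Rightarrow> real" where
  "loglik N T x y a b s m =
     - (real N * real T / 2) * ln (2 * pi)
     - (1/2) * (\<Sum>i<N. (real T - 1) * ln s + ln (s + real T * m)
         + (1 / s) * ((\<Sum>t<T. (y i t - a - b * x i t)\<^sup>2)
                      - m * (\<Sum>t<T. y i t - a - b * x i t)\<^sup>2 / (s + real T * m)))"

definition est_hsiao :: "nat \<Rightarrow> nat \<Rightarrow> (nat \<Rightarrow> nat \<Rightarrow> real) \<Rightarrow> (nat \<Rightarrow> nat \<Rightarrow> real) \<Rightarrow> real \<times> real" where
  "est_hsiao N T x y =
     (SOME (s, m). s > 0 \<and> m \<ge> 0 \<and>
        (\<exists>a b. \<forall>a' b' s' m'. s' > 0 \<and> m' \<ge> 0 \<longrightarrow>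
                 loglik N T x y a' b' s' m' \<le> loglik N T x y a b s m))"

definition pooled_res :: "nat \<Rightarrow> nat \<Rightarrow> (nat \<Rightarrow> nat \<Rightarrow> real) \<Rightarrow> (nat \<Rightarrow> nat \<Rightarrow> real) \<Rightarrow> nat \<Rightarrow> nat \<Rightarrow> real" where
  "pooled_res N T x y i t =
     (let bP = (\<Sum>i<N. \<Sum>t<T. (x i t - mean_all N T x) * (y i t - mean_all N T y))
               / (\<Sum>i<N. \<Sum>t<T. (x i t - mean_all N T x)\<^sup>2);
          aP = mean_all N T y - bP * mean_all N T x
      in y i t - aP - bP * x i t)"

definition est_wooldridge :: "real \<Rightarrow> nat \<Rightarrow> nat \<Rightarrow> nat \<Rightarrow> (nat \<Rightarrow> nat \<Rightarrow> real) \<Rightarrow> (nat \<Rightarrow> nat \<Rightarrow> real) \<Rightarrow> real \<times> real" where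
  "est_wooldridge eps K N T x y =
     (let r = pooled_res N T x y;
          C = (\<Sum>i<N. \<Sum>t<T. \<Sum>s\<in>{Suc t..<T}. r i t * r i s)
              / (real N * real T * (real T - 1) / 2 - real K);
          st = (\<Sum>i<N. \<Sum>t<T. (r i t)\<^sup>2) / (real N * real T - real K) - C
      in (max (- eps * st) st, max 0 C))"

datatype estimator = Unbiased | Hsiao | Wooldridge real nat

definition valid_estimator :: "estimator \<Rightarrow> bool" where
  "valid_estimator e = (case e of Wooldridge eps K \<Rightarrow> eps > 0 \<and> (K = 0 \<or> K = 2) | _ \<Rightarrow> True)"

definition est_var :: "estimator \<Rightarrow> nat \<Rightarrow> nat \<Rightarrow> (nat \<Rightarrow> nat \<Rightarrow> real) \<Rightarrow> (nat \<Rightarrow> nat \<Rightarrow> real) \<Rightarrow> real \<times> real" where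
  "est_var e N T x y = (case e of Unbiased \<Rightarrow> est_unbiased N T x y
                                | Hsiao \<Rightarrow> est_hsiao N T x y
                                | Wooldridge eps K \<Rightarrow> est_wooldridge eps K N T x y)"

definition sig_eps_hat :: "estimator \<Rightarrow> nat \<Rightarrow> nat \<Rightarrow> (nat \<Rightarrow> nat \<Rightarrow> real) \<Rightarrow> (nat \<Rightarrow> nat \<Rightarrow> real) \<Rightarrow> real" where
  "sig_eps_hat e N T x y = sqrt (fst (est_var e N T x y))"

definition sig_mu_hat :: "estimator \<Rightarrow> nat \<Rightarrow> nat \<Rightarrow> (nat \<Rightarrow> nat \<Rightarrow> real) \<Rightarrow> (nat \<Rightarrow> nat \<Rightarrow> real) \<Rightarrow> real" where
  "sig_mu_hat e N T x y = sqrt (snd (est_var e N T x y))"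

definition psi_hat :: "estimator \<Rightarrow> nat \<Rightarrow> nat \<Rightarrow> (nat \<Rightarrow> nat \<Rightarrow> real) \<Rightarrow> (nat \<Rightarrow> nat \<Rightarrow> real) \<Rightarrow> real" where
  "psi_hat e N T x y = sig_mu_hat e N T x y / sig_eps_hat e N T x y"

definition hausman :: "nat \<Rightarrow> nat \<Rightarrow> (nat \<Rightarrow> nat \<Rightarrow> real) \<Rightarrow> (nat \<Rightarrow> nat \<Rightarrow> real) \<Rightarrow> real \<Rightarrow> real \<Rightarrow> real" where
  "hausman N T x y se smu =
     (betaW N T x y - betaB N T x y)\<^sup>2
     / (se\<^sup>2 / SSW N T x + (smu\<^sup>2 + se\<^sup>2 / real T) / SSB N T x)"

definition event_B :: "estimator \<Rightarrow> nat \<Rightarrow> nat \<Rightarrow> real \<Rightarrow> (nat \<Rightarrow> nat \<Rightarrow> real) \<Rightarrow> (nat \<Rightarrow> nat \<Rightarrow> real) \<Rightarrow> bool" where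
  "event_B e N T alt x y =
     (hausman N T x y (sig_eps_hat e N T x y) (sig_mu_hat e N T x y) \<le> (Phi_inv (1 - alt / 2))\<^sup>2)"

definition in_K :: "estimator \<Rightarrow> nat \<Rightarrow> nat \<Rightarrow> real \<Rightarrow> real \<Rightarrow> (nat \<Rightarrow> nat \<Rightarrow> real) \<Rightarrow> (nat \<Rightarrow> nat \<Rightarrow> real) \<Rightarrow> real \<Rightarrow> bool" where
  "in_K e N T al alt x y b =
     (let se = sig_eps_hat e N T x y; ph = psi_hat e N T x y; z = Phi_inv (1 - al / 2) in
      if event_B e N T alt x y
      then \<bar>b - beta_gls N T ph x y\<bar> \<le> z * sqrt (se\<^sup>2 / (SSW N T x + SSB N T x / qf ph T))
      else \<bar>b - betaW N T x y\<bar> \<le> z * se / sqrt (SSW N T x))"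

definition in_J :: "estimator \<Rightarrow> nat \<Rightarrow> nat \<Rightarrow> real \<Rightarrow> (nat \<Rightarrow> nat \<Rightarrow> real) \<Rightarrow> (nat \<Rightarrow> nat \<Rightarrow> real) \<Rightarrow> real \<Rightarrow> bool" where
  "in_J e N T c x y b =
     (\<bar>b - betaW N T x y\<bar> \<le> Phi_inv ((c + 1) / 2) * sig_eps_hat e N T x y / sqrt (SSW N T x))"

text \<open>Parameters: a, b (= beta), se (= sigma_eps), sx (= sigma_x), psi, rho, tau;
  sigma_mu = psi * sigma_eps.\<close>

definition cov_K :: "estimator \<Rightarrow> nat \<Rightarrow> nat \<Rightarrow> real \<Rightarrow> real \<Rightarrow>
    real \<Rightarrow> real \<Rightarrow> real \<Rightarrow> real \<Rightarrow> real \<Rightarrow> real \<Rightarrow> real \<Rightarrow> real" where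
  "cov_K e N T al alt a b se sx psi rho tau =
     measure (sample_space N T)
       {\<omega> \<in> space (sample_space N T).
          in_K e N T al alt (model_x sx rho \<omega>) (model_y T a b se sx psi rho tau \<omega>) b}"

definition cov_J :: "estimator \<Rightarrow> nat \<Rightarrow> nat \<Rightarrow> real \<Rightarrow>
    real \<Rightarrow> real \<Rightarrow> real \<Rightarrow> real \<Rightarrow> real \<Rightarrow> real \<Rightarrow> real \<Rightarrow> real" where
  "cov_J e N T c a b se sx psi rho tau =
     measure (sample_space N T)
       {\<omega> \<in> space (sample_space N T).
          in_J e N T c (model_x sx rho \<omega>) (model_y T a b se sx psi rho tau \<omega>) b}"

definition c_min :: "estimator \<Rightarrow> nat \<Rightarrow> nat \<Rightarrow> real \<Rightarrow> real \<Rightarrow> real \<Rightarrow>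
    real \<Rightarrow> real \<Rightarrow> real \<Rightarrow> real \<Rightarrow> real" where
  "c_min e N T al alt rt a b se sx =
     Inf {cov_K e N T al alt a b se sx psi rho tau | psi rho tau.
            -1 < tau \<and> tau < 1 \<and> 0 < psi \<and> 0 \<le> rho \<and> rho \<le> rt}"

definition c_star :: "estimator \<Rightarrow> nat \<Rightarrow> nat \<Rightarrow> real \<Rightarrow> real \<Rightarrow> real \<Rightarrow>
    real \<Rightarrow> real \<Rightarrow> real \<Rightarrow> real \<Rightarrow> real \<Rightarrow> real \<Rightarrow> real \<Rightarrow> real" where
  "c_star e N T al alt rt a b se sx psi rho tau =
     (THE c. 0 < c \<and> c < 1 \<and>
        cov_J e N T c a b se sx psi rho tau = c_min e N T al alt rt a b se sx)"

definition SSW_u :: "nat \<Rightarrow> nat \<Rightarrow> (nidx \<Rightarrow> real) \<Rightarrow> real" where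
  "SSW_u N T \<omega> = SSW N T (\<lambda>i t. \<omega> (U i t))"

definition w_hat :: "estimator \<Rightarrow> nat \<Rightarrow> nat \<Rightarrow> (nat \<Rightarrow> nat \<Rightarrow> real) \<Rightarrow> (nat \<Rightarrow> nat \<Rightarrow> real) \<Rightarrow> real" where
  "w_hat e N T x y = qf (psi_hat e N T x y) T / (qf (psi_hat e N T x y) T + r_ratio N T x)"

definition scaled_expected_length :: "estimator \<Rightarrow> nat \<Rightarrow> nat \<Rightarrow> real \<Rightarrow> real \<Rightarrow> real \<Rightarrow>
    real \<Rightarrow> real \<Rightarrow> real \<Rightarrow> real \<Rightarrow> real \<Rightarrow> real \<Rightarrow> real \<Rightarrow> real" where
  "scaled_expected_length e N T al alt rt a b se sx psi rho tau =
     (let M = sample_space N T;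
          X = (\<lambda>\<omega>. model_x sx rho \<omega>);
          Y = (\<lambda>\<omega>. model_y T a b se sx psi rho tau \<omega>);
          base = (\<lambda>\<omega>. (sig_eps_hat e N T (X \<omega>) (Y \<omega>) / se) * (SSW_u N T \<omega>) powr (-1/2));
          num = integral\<^sup>L M (\<lambda>\<omega>. base \<omega> *
                   (if event_B e N T alt (X \<omega>) (Y \<omega>)
                    then sqrt (w_hat e N T (X \<omega>) (Y \<omega>)) else 1));
          den = integral\<^sup>L M base;
          cs = c_star e N T al alt rt a b se sx psi rho tau
      in (Phi_inv (1 - al / 2) / Phi_inv ((cs + 1) / 2)) * (num / den))"

end

theory Submission imports Defs begin

lemma aux_lin: "(u::real) - (m - B*c) - B*w = (u - m) - B*(w - c)"
  by (simp add: algebra_simps)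

lemma pooled_res_alt: "pooled_res N T x y i t =
   (y i t - mean_all N T y) - ((\<Sum>i<N. \<Sum>t<T. (x i t - mean_all N T x) * (y i t - mean_all N T y))
               / (\<Sum>i<N. \<Sum>t<T. (x i t - mean_all N T x)\<^sup>2)) * (x i t - mean_all N T x)"
  unfolding pooled_res_def Let_def by (rule aux_lin)

lemma qf_pos: "T > 0 \<Longrightarrow> qf p T > 0"
  unfolding qf_def by (simp add: add_nonneg_pos)

locale reflp =
  fixes N T :: nat and a b :: real and x y y' :: "nat \<Rightarrow> nat \<Rightarrow> real"
  assumes N: "N > 0" and T: "T > 0"
    and H: "\<And>i t. i < N \<Longrightarrow> t < T \<Longrightarrow> y' i t = 2*a + 2*b*x i t - y i t"
begin

lemma sumH: "i < N \<Longrightarrow> (\<Sum>t<T. y' i t) = 2*a*real T + 2*b*(\<Sum>t<T. x i t) - (\<Sum>t<T. y i t)"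
proof -
  assume i: "i < N"
  have "(\<Sum>t<T. y' i t) = (\<Sum>t<T. 2*a + 2*b*x i t - y i t)"
    using H i by (intro sum.cong) auto
  also have "\<dots> = 2*a*real T + 2*b*(\<Sum>t<T. x i t) - (\<Sum>t<T. y i t)"
    by (simp add: sum_subtractf sum.distrib sum_distrib_left)
  finally show ?thesis .
qed

lemma mean_i_y': "i < N \<Longrightarrow> mean_i T y' i = 2*a + 2*b*mean_i T x i - mean_i T y i"
  using T by (simp add: mean_i_def sumH field_simps)

lemma dev_y': "i < N \<Longrightarrow> t < T \<Longrightarrow>
   y' i t - mean_i T y' i = 2*b*(x i t - mean_i T x i) - (y i t - mean_i T y i)"
  by (simp add: mean_i_y' H algebra_simps)

lemma mean_all_y': "mean_all N T y' = 2*a + 2*b*mean_all N T x - mean_all N T y"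
proof -
  have "(\<Sum>i<N. \<Sum>t<T. y' i t) = (\<Sum>i<N. 2*a*real T + 2*b*(\<Sum>t<T. x i t) - (\<Sum>t<T. y i t))"
    using sumH by (intro sum.cong) auto
  also have "\<dots> = 2*a*real T * real N + 2*b*(\<Sum>i<N. \<Sum>t<T. x i t) - (\<Sum>i<N. \<Sum>t<T. y i t)"
    by (simp add: sum_subtractf sum.distrib sum_distrib_left)
  finally have S: "(\<Sum>i<N. \<Sum>t<T. y' i t) = 2*a*real T * real N + 2*b*(\<Sum>i<N. \<Sum>t<T. x i t) - (\<Sum>i<N. \<Sum>t<T. y i t)" .
  have "mean_all N T y' = (2*a*real T * real N + 2*b*(\<Sum>i<N. \<Sum>t<T. x i t) - (\<Sum>i<N. \<Sum>t<T. y i t)) / (real N * real T)"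
    by (simp add: mean_all_def S)
  also have "\<dots> = 2*a + 2*b*mean_all N T x - mean_all N T y"
    using N T by (simp add: mean_all_def field_simps)
  finally show ?thesis .
qed

lemma devB_y': "i < N \<Longrightarrow>
   mean_i T y' i - mean_all N T y' = 2*b*(mean_i T x i - mean_all N T x) - (mean_i T y i - mean_all N T y)"
  by (simp add: mean_i_y' mean_all_y' algebra_simps)

lemma devA_y': "i < N \<Longrightarrow> t < T \<Longrightarrow>
   y' i t - mean_all N T y' = 2*b*(x i t - mean_all N T x) - (y i t - mean_all N T y)"
  by (simp add: H mean_all_y' algebra_simps)

lemma SSW_zero: "SSW N T x = 0 \<Longrightarrow> i < N \<Longrightarrow> t < T \<Longrightarrow> x i t - mean_i T x i = 0"
  unfolding SSW_def
  by (subst (asm) sum_nonneg_eq_0_iff) (auto simp: sum_nonneg_eq_0_iff sum_nonneg)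

lemma SSB_zero: "SSB N T x = 0 \<Longrightarrow> i < N \<Longrightarrow> mean_i T x i - mean_all N T x = 0"
  unfolding SSB_def
  by (subst (asm) sum_nonneg_eq_0_iff) auto

lemma betaW_y': "betaW N T x y' = (if SSW N T x = 0 then 0 else 2*b - betaW N T x y)"
proof -
  have "(\<Sum>i<N. \<Sum>t<T. (x i t - mean_i T x i) * (y' i t - mean_i T y' i))
     = (\<Sum>i<N. \<Sum>t<T. 2*b*(x i t - mean_i T x i)\<^sup>2 - (x i t - mean_i T x i) * (y i t - mean_i T y i))"
    by (intro sum.cong refl) (simp add: dev_y' power2_eq_square algebra_simps)
  also have "\<dots> = 2*b*SSW N T x - (\<Sum>i<N. \<Sum>t<T. (x i t - mean_i T x i) * (y i t - mean_i T y i))"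
    by (simp add: SSW_def sum_subtractf sum_distrib_left)
  finally show ?thesis by (auto simp: betaW_def field_simps)
qed

lemma betaB_y': "betaB N T x y' = (if SSB N T x = 0 then 0 else 2*b - betaB N T x y)"
proof -
  have "(\<Sum>i<N. (mean_i T x i - mean_all N T x) * (mean_i T y' i - mean_all N T y'))
     = (\<Sum>i<N. 2*b*(mean_i T x i - mean_all N T x)\<^sup>2 - (mean_i T x i - mean_all N T x) * (mean_i T y i - mean_all N T y))"
    by (intro sum.cong refl) (simp add: devB_y' power2_eq_square algebra_simps)
  also have "\<dots> = 2*b*SSB N T x - (\<Sum>i<N. (mean_i T x i - mean_all N T x) * (mean_i T y i - mean_all N T y))"
    by (simp add: SSB_def sum_subtractf sum_distrib_left)
  finally show ?thesis by (auto simp: betaB_def field_simps)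
qed

lemma fe_res_y': "i < N \<Longrightarrow> t < T \<Longrightarrow> fe_res N T x y' i t = - fe_res N T x y i t"
  by (cases "SSW N T x = 0")
     (auto simp: fe_res_def betaW_y' dev_y' SSW_zero algebra_simps)

lemma be_res_y': "i < N \<Longrightarrow> be_res N T x y' i = - be_res N T x y i"
  by (cases "SSB N T x = 0")
     (auto simp: be_res_def betaB_y' devB_y' SSB_zero algebra_simps)

lemma est_unbiased_y': "est_unbiased N T x y' = est_unbiased N T x y"
proof -
  have 1: "(\<Sum>i<N. \<Sum>t<T. (fe_res N T x y' i t)\<^sup>2) = (\<Sum>i<N. \<Sum>t<T. (fe_res N T x y i t)\<^sup>2)"
    by (intro sum.cong refl) (simp add: fe_res_y')
  have 2: "(\<Sum>i<N. (be_res N T x y' i)\<^sup>2) = (\<Sum>i<N. (be_res N T x y i)\<^sup>2)"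
    by (intro sum.cong refl) (simp add: be_res_y')
  show ?thesis by (simp add: est_unbiased_def 1 2)
qed

lemma loglik_y': "loglik N T x y' a' b' s m = loglik N T x y (2*a - a') (2*b - b') s m"
proof -
  have e: "i < N \<Longrightarrow> t < T \<Longrightarrow> y' i t - a' - b' * x i t = - (y i t - (2*a - a') - (2*b - b') * x i t)" for i t
    by (simp add: H algebra_simps)
  have 1: "i < N \<Longrightarrow> (\<Sum>t<T. (y' i t - a' - b' * x i t)\<^sup>2) = (\<Sum>t<T. (y i t - (2*a - a') - (2*b - b') * x i t)\<^sup>2)" for i
    by (intro sum.cong refl) (metis e lessThan_iff power2_minus)
  have 2: "i < N \<Longrightarrow> (\<Sum>t<T. y' i t - a' - b' * x i t) = - (\<Sum>t<T. y i t - (2*a - a') - (2*b - b') * x i t)" for i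
    by (simp add: e sum_negf[symmetric])
  show ?thesis unfolding loglik_def
    by (intro arg_cong2[where f="(-)"] refl arg_cong[where f="\<lambda>z. (1/2) * z"] sum.cong) (simp_all add: 1 2)
qed

lemma est_hsiao_y': "est_hsiao N T x y' = est_hsiao N T x y"
proof -
  have "(\<exists>a0 b0. \<forall>a1 b1 s' m'. s' > 0 \<and> m' \<ge> 0 \<longrightarrow> loglik N T x y' a1 b1 s' m' \<le> loglik N T x y' a0 b0 s m)
    \<longleftrightarrow> (\<exists>a0 b0. \<forall>a1 b1 s' m'. s' > 0 \<and> m' \<ge> 0 \<longrightarrow> loglik N T x y a1 b1 s' m' \<le> loglik N T x y a0 b0 s m)" for s m :: real
  proof
    assume "\<exists>a0 b0. \<forall>a1 b1 s' m'. s' > 0 \<and> m' \<ge> 0 \<longrightarrow> loglik N T x y' a1 b1 s' m' \<le> loglik N T x y' a0 b0 s m"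
    then obtain a0 b0 where h: "\<forall>a1 b1 s' m'. s' > 0 \<and> m' \<ge> 0 \<longrightarrow> loglik N T x y' a1 b1 s' m' \<le> loglik N T x y' a0 b0 s m" by blast
    show "\<exists>a0 b0. \<forall>a1 b1 s' m'. s' > 0 \<and> m' \<ge> 0 \<longrightarrow> loglik N T x y a1 b1 s' m' \<le> loglik N T x y a0 b0 s m"
    proof (intro exI allI impI)
      fix a1 b1 s' m' :: real assume p: "s' > 0 \<and> m' \<ge> 0"
      have "loglik N T x y' (2*a - a1) (2*b - b1) s' m' \<le> loglik N T x y' a0 b0 s m" using h p by blast
      thus "loglik N T x y a1 b1 s' m' \<le> loglik N T x y (2*a - a0) (2*b - b0) s m"
        by (simp add: loglik_y')
    qed
  next
    assume "\<exists>a0 b0. \<forall>a1 b1 s' m'. s' > 0 \<and> m' \<ge> 0 \<longrightarrow> loglik N T x y a1 b1 s' m' \<le> loglik N T x y a0 b0 s m"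
    then obtain a0 b0 where h: "\<forall>a1 b1 s' m'. s' > 0 \<and> m' \<ge> 0 \<longrightarrow> loglik N T x y a1 b1 s' m' \<le> loglik N T x y a0 b0 s m" by blast
    show "\<exists>a0 b0. \<forall>a1 b1 s' m'. s' > 0 \<and> m' \<ge> 0 \<longrightarrow> loglik N T x y' a1 b1 s' m' \<le> loglik N T x y' a0 b0 s m"
    proof (intro exI allI impI)
      fix a1 b1 s' m' :: real assume p: "s' > 0 \<and> m' \<ge> 0"
      have "loglik N T x y (2*a - a1) (2*b - b1) s' m' \<le> loglik N T x y a0 b0 s m" using h p by blast
      thus "loglik N T x y' a1 b1 s' m' \<le> loglik N T x y' (2*a - a0) (2*b - b0) s m"
        by (simp add: loglik_y')
    qed
  qed
  thus ?thesis unfolding est_hsiao_def by simp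
qed

lemma D_zero: "(\<Sum>i<N. \<Sum>t<T. (x i t - mean_all N T x)\<^sup>2) = 0 \<Longrightarrow> i < N \<Longrightarrow> t < T \<Longrightarrow> x i t - mean_all N T x = 0"
  by (subst (asm) sum_nonneg_eq_0_iff) (auto simp: sum_nonneg_eq_0_iff sum_nonneg)

lemma pooled_res_y': "i < N \<Longrightarrow> t < T \<Longrightarrow> pooled_res N T x y' i t = - pooled_res N T x y i t"
proof -
  assume it: "i < N" "t < T"
  define D where "D = (\<Sum>i<N. \<Sum>t<T. (x i t - mean_all N T x)\<^sup>2)"
  define C where "C = (\<Sum>i<N. \<Sum>t<T. (x i t - mean_all N T x) * (y i t - mean_all N T y))"
  have "(\<Sum>i<N. \<Sum>t<T. (x i t - mean_all N T x) * (y' i t - mean_all N T y'))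
     = (\<Sum>i<N. \<Sum>t<T. 2*b*(x i t - mean_all N T x)\<^sup>2 - (x i t - mean_all N T x) * (y i t - mean_all N T y))"
    by (intro sum.cong refl) (simp add: devA_y' power2_eq_square algebra_simps)
  also have "\<dots> = 2*b*D - C"
    by (simp add: D_def C_def sum_subtractf sum_distrib_left)
  finally have C': "(\<Sum>i<N. \<Sum>t<T. (x i t - mean_all N T x) * (y' i t - mean_all N T y')) = 2*b*D - C" .
  show ?thesis
  proof (cases "D = 0")
    case True
    have "x i t - mean_all N T x = 0" using D_zero[OF True[unfolded D_def] it] .
    then show ?thesis using it by (simp add: pooled_res_alt devA_y')
  next
    case False
    have "pooled_res N T x y' i t = (y' i t - mean_all N T y') - ((2*b*D - C)/D) * (x i t - mean_all N T x)"
      by (simp only: pooled_res_alt C' D_def[symmetric])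
    also have "\<dots> = - ((y i t - mean_all N T y) - (C/D) * (x i t - mean_all N T x))"
      using False it by (simp add: devA_y' field_simps)
    also have "(y i t - mean_all N T y) - (C/D) * (x i t - mean_all N T x) = pooled_res N T x y i t"
      by (simp only: pooled_res_alt C_def[symmetric] D_def[symmetric])
    finally show ?thesis .
  qed
qed

lemma est_wooldridge_y': "est_wooldridge eps K N T x y' = est_wooldridge eps K N T x y"
proof -
  have 1: "(\<Sum>i<N. \<Sum>t<T. \<Sum>s\<in>{Suc t..<T}. pooled_res N T x y' i t * pooled_res N T x y' i s)
         = (\<Sum>i<N. \<Sum>t<T. \<Sum>s\<in>{Suc t..<T}. pooled_res N T x y i t * pooled_res N T x y i s)"
    by (intro sum.cong refl) (simp add: pooled_res_y')
  have 2: "(\<Sum>i<N. \<Sum>t<T. (pooled_res N T x y' i t)\<^sup>2) = (\<Sum>i<N. \<Sum>t<T. (pooled_res N T x y i t)\<^sup>2)"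
    by (intro sum.cong refl) (simp add: pooled_res_y')
  show ?thesis unfolding est_wooldridge_def Let_def 1 2 ..
qed

lemma est_var_y': "est_var e N T x y' = est_var e N T x y"
  by (cases e) (simp_all add: est_var_def est_unbiased_y' est_hsiao_y' est_wooldridge_y')

lemma sig_y': "sig_eps_hat e N T x y' = sig_eps_hat e N T x y"
   "sig_mu_hat e N T x y' = sig_mu_hat e N T x y"
   "psi_hat e N T x y' = psi_hat e N T x y"
  by (simp_all add: sig_eps_hat_def sig_mu_hat_def psi_hat_def est_var_y')

lemma in_J_y': "in_J e N T c x y' b = in_J e N T c x y b"
proof -
  have "\<bar>b - betaW N T x y'\<bar> = \<bar>b - betaW N T x y\<bar>"
  proof (cases "SSW N T x = 0")
    case True then show ?thesis by (simp add: betaW_y' betaW_def)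
  next
    case False
    have "\<bar>b - (2*b - betaW N T x y)\<bar> = \<bar>b - betaW N T x y\<bar>"
      by (subst abs_minus_commute) (simp add: algebra_simps)
    with False show ?thesis by (simp add: betaW_y')
  qed
  then show ?thesis by (simp add: in_J_def sig_y')
qed

lemma factor_y': "(if event_B e N T alt x y' then sqrt (w_hat e N T x y') else 1)
   = (if event_B e N T alt x y then sqrt (w_hat e N T x y) else 1)"
proof (cases "SSW N T x = 0 \<or> SSB N T x = 0")
  case True
  have "w_hat e N T x z = 1" for z
    using True qf_pos[OF T, of "psi_hat e N T x z"] by (auto simp: w_hat_def r_ratio_def)
  then show ?thesis by simp
next
  case False
  have "hausman N T x y' s m = hausman N T x y s m" for s m
    using False by (simp add: hausman_def betaW_y' betaB_y' power2_commute)
  then show ?thesis by (simp add: event_B_def w_hat_def sig_y')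
qed

end

lemma std_normal_prob: "prob_space std_normal"
  unfolding std_normal_def using prob_space_normal_density by simp

lemma space_std_normal[simp]: "space std_normal = UNIV"
  by (simp add: std_normal_def)

lemma sets_std_normal[simp]: "sets std_normal = sets borel"
  by (simp add: std_normal_def)

lemma std_normal_sym:
  assumes A: "A \<in> sets borel"
  shows "emeasure std_normal (uminus -` A) = emeasure std_normal A"
proof -
  have m: "uminus -` A \<in> sets borel"
    using measurable_sets[OF borel_measurable_uminus[OF measurable_ident_sets[OF refl]] A] by simp
  have "emeasure std_normal (uminus -` A) = (\<integral>\<^sup>+ x. ennreal (std_normal_density x) * indicator (uminus -` A) x \<partial>lborel)"
    unfolding std_normal_def using m by (subst emeasure_density) auto
  also have "\<dots> = (\<integral>\<^sup>+ x. ennreal (std_normal_density x) * indicator A (- x) \<partial>lborel)"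
    by (simp add: indicator_def)
  also have "\<dots> = ennreal \<bar>-1\<bar> * (\<integral>\<^sup>+ x. ennreal (std_normal_density (0 + -1 * x)) * indicator A (- (0 + -1*x)) \<partial>lborel)"
    using A by (intro nn_integral_real_affine) auto
  also have "\<dots> = (\<integral>\<^sup>+ x. ennreal (std_normal_density x) * indicator A x \<partial>lborel)"
    by (simp add: normal_density_def)
  also have "\<dots> = emeasure std_normal A"
    unfolding std_normal_def using A by (subst emeasure_density) auto
  finally show ?thesis .
qed

definition flipj :: "nidx \<Rightarrow> bool" where
  "flipj j = (case j of W _ \<Rightarrow> True | Eps _ _ \<Rightarrow> True | _ \<Rightarrow> False)"

definition phi :: "nat \<Rightarrow> nat \<Rightarrow> (nidx \<Rightarrow> real) \<Rightarrow> (nidx \<Rightarrow> real)" where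
  "phi N T \<omega> = (\<lambda>j\<in>idxs N T. if flipj j then - \<omega> j else \<omega> j)"

lemma finite_idxs: "finite (idxs N T)"
proof -
  have "idxs N T = (\<lambda>(i,t). U i t) ` ({..<N} \<times> {..<T}) \<union> V ` {..<N} \<union> W ` {..<N}
      \<union> (\<lambda>(i,t). Eps i t) ` ({..<N} \<times> {..<T})"
    unfolding idxs_def by auto
  then show ?thesis by simp
qed

lemma space_ss: "space (sample_space N T) = PiE (idxs N T) (\<lambda>_. UNIV)"
  by (simp add: sample_space_def space_PiM)

lemma phi_meas: "phi N T \<in> measurable (sample_space N T) (sample_space N T)"
  unfolding phi_def sample_space_def
proof (intro measurable_restrict)
  fix j assume j: "j \<in> idxs N T"
  let ?S = "Pi\<^sub>M (idxs N T) (\<lambda>_. std_normal)"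
  have eq: "measurable ?S std_normal = measurable ?S borel"
    by (rule measurable_cong_sets) simp_all
  have 1: "(\<lambda>x. x j) \<in> borel_measurable ?S"
    using measurable_component_singleton[OF j, of "\<lambda>_. std_normal"] eq by simp
  then have 2: "(\<lambda>x. - x j) \<in> borel_measurable ?S"
    by (rule borel_measurable_uminus)
  have "(\<lambda>x. if flipj j then - x j else x j) \<in> borel_measurable ?S"
    using 1 2 by (cases "flipj j") simp_all
  then show "(\<lambda>x. if flipj j then - x j else x j) \<in> ?S \<rightarrow>\<^sub>M std_normal"
    using eq by simp
qed

lemma phi_space: "\<omega> \<in> space (sample_space N T) \<Longrightarrow> phi N T \<omega> \<in> space (sample_space N T)"
  by (simp add: space_ss phi_def)

lemma phi_phi: "\<omega> \<in> space (sample_space N T) \<Longrightarrow> phi N T (phi N T \<omega>) = \<omega>"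
  by (auto simp: space_ss phi_def PiE_def extensional_def)

lemma phi_off: "\<omega> \<in> space (sample_space N T) \<Longrightarrow> \<not> flipj j \<Longrightarrow> phi N T \<omega> j = \<omega> j"
  by (auto simp: space_ss phi_def PiE_def extensional_def)

lemma phi_on: "\<omega> \<in> space (sample_space N T) \<Longrightarrow> flipj j \<Longrightarrow> j \<in> idxs N T \<Longrightarrow> phi N T \<omega> j = - \<omega> j"
  by (auto simp: phi_def)

lemma distr_phi: "distr (sample_space N T) (sample_space N T) (phi N T) = sample_space N T"
proof -
  interpret product_sigma_finite "\<lambda>_. std_normal"
    unfolding product_sigma_finite_def
    using std_normal_prob prob_space_imp_sigma_finite by blast
  let ?I = "idxs N T"
  show ?thesis unfolding sample_space_def
  proof (rule PiM_eqI)
    show "finite ?I" by (rule finite_idxs)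
    show "sets (distr (Pi\<^sub>M ?I (\<lambda>_. std_normal)) (Pi\<^sub>M ?I (\<lambda>_. std_normal)) (phi N T)) = sets (Pi\<^sub>M ?I (\<lambda>_. std_normal))"
      by simp
    fix A assume A: "\<And>i. i \<in> ?I \<Longrightarrow> A i \<in> sets std_normal"
    define A' where "A' i = (if flipj i then uminus -` A i else A i)" for i
    have A': "A' i \<in> sets std_normal" if "i \<in> ?I" for i
      using A[OF that] measurable_sets[OF borel_measurable_uminus[OF measurable_ident_sets[OF refl]], of "A i"]
      by (auto simp: A'_def)
    have eqs: "phi N T -` Pi\<^sub>E ?I A \<inter> space (Pi\<^sub>M ?I (\<lambda>_. std_normal)) = Pi\<^sub>E ?I A'"
      by (auto simp: phi_def space_PiM A'_def PiE_def Pi_def split: if_splits)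
    have "emeasure (distr (Pi\<^sub>M ?I (\<lambda>_. std_normal)) (Pi\<^sub>M ?I (\<lambda>_. std_normal)) (phi N T)) (Pi\<^sub>E ?I A)
       = emeasure (Pi\<^sub>M ?I (\<lambda>_. std_normal)) (Pi\<^sub>E ?I A')"
      using phi_meas[of N T] A finite_idxs[of N T]
      by (subst emeasure_distr) (auto simp: sample_space_def eqs intro!: sets_PiM_I_finite)
    also have "\<dots> = (\<Prod>i\<in>?I. emeasure std_normal (A' i))"
      using A' finite_idxs by (intro emeasure_PiM) auto
    also have "\<dots> = (\<Prod>i\<in>?I. emeasure std_normal (A i))"
      using A by (intro prod.cong refl) (auto simp: A'_def std_normal_sym)
    finally show "emeasure (distr (Pi\<^sub>M ?I (\<lambda>_. std_normal)) (Pi\<^sub>M ?I (\<lambda>_. std_normal)) (phi N T)) (Pi\<^sub>E ?I A)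
       = (\<Prod>i\<in>?I. emeasure std_normal (A i))" .
  qed
qed

lemma integral_phi:
  fixes f :: "(nidx \<Rightarrow> real) \<Rightarrow> real"
  shows "integral\<^sup>L (sample_space N T) f = integral\<^sup>L (sample_space N T) (\<lambda>\<omega>. f (phi N T \<omega>))"
proof (cases "f \<in> borel_measurable (sample_space N T)")
  case True
  have "integral\<^sup>L (sample_space N T) f = integral\<^sup>L (distr (sample_space N T) (sample_space N T) (phi N T)) f"
    by (simp add: distr_phi)
  also have "\<dots> = integral\<^sup>L (sample_space N T) (\<lambda>\<omega>. f (phi N T \<omega>))"
    using True phi_meas by (intro integral_distr) auto
  finally show ?thesis .
next
  case False
  have "(\<lambda>\<omega>. f (phi N T \<omega>)) \<notin> borel_measurable (sample_space N T)"
  proof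
    assume "(\<lambda>\<omega>. f (phi N T \<omega>)) \<in> borel_measurable (sample_space N T)"
    then have "(\<lambda>\<omega>. f (phi N T (phi N T \<omega>))) \<in> borel_measurable (sample_space N T)"
      using measurable_compose[OF phi_meas] by blast
    moreover have "\<omega> \<in> space (sample_space N T) \<Longrightarrow> f (phi N T (phi N T \<omega>)) = f \<omega>" for \<omega>
      by (simp add: phi_phi)
    ultimately have "f \<in> borel_measurable (sample_space N T)"
      using measurable_cong by (metis (no_types, lifting))
    with False show False by simp
  qed
  then show ?thesis using False
    by (metis borel_measurable_integrable not_integrable_integral_eq)
qed

lemma measure_phi:
  "measure (sample_space N T) {\<omega> \<in> space (sample_space N T). P \<omega>}
   = measure (sample_space N T) {\<omega> \<in> space (sample_space N T). P (phi N T \<omega>)}"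
proof -
  interpret prob_space "sample_space N T"
    unfolding sample_space_def by (intro prob_space_PiM std_normal_prob)
  have gen: "measure (sample_space N T) A = integral\<^sup>L (sample_space N T) (indicator A)"
    if "A \<subseteq> space (sample_space N T)" for A
  proof (cases "A \<in> sets (sample_space N T)")
    case True then show ?thesis by simp
  next
    case False
    have "indicator A \<notin> (borel_measurable (sample_space N T) :: (_ \<Rightarrow> real) set)"
      using False that borel_measurable_indicator_iff[of A "sample_space N T"]
      by (simp add: Int_absorb2)
    have "measure (sample_space N T) A = 0" using False by (rule measure_notin_sets)
    moreover have "integral\<^sup>L (sample_space N T) (indicator A :: _ \<Rightarrow> real) = 0"
      by (metis \<open>indicator A \<notin> borel_measurable (sample_space N T)\<close> borel_measurable_integrable not_integrable_integral_eq)
    ultimately show ?thesis by simp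
  qed
  have "measure (sample_space N T) {\<omega> \<in> space (sample_space N T). P \<omega>}
      = integral\<^sup>L (sample_space N T) (indicator {\<omega> \<in> space (sample_space N T). P \<omega>})"
    by (rule gen) auto
  also have "\<dots> = integral\<^sup>L (sample_space N T) (\<lambda>\<omega>. indicator {\<omega> \<in> space (sample_space N T). P \<omega>} (phi N T \<omega>))"
    by (rule integral_phi)
  also have "\<dots> = integral\<^sup>L (sample_space N T) (indicator {\<omega> \<in> space (sample_space N T). P (phi N T \<omega>)})"
    by (intro Bochner_Integration.integral_cong refl) (auto simp: indicator_def phi_space)
  also have "\<dots> = measure (sample_space N T) {\<omega> \<in> space (sample_space N T). P (phi N T \<omega>)}"
    by (rule gen[symmetric]) auto
  finally show ?thesis .
qed


lemma idx_in: "i < N \<Longrightarrow> W i \<in> idxs N T" "i < N \<Longrightarrow> t < T \<Longrightarrow> Eps i t \<in> idxs N T"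
  by (auto simp: idxs_def)

lemma mx: "\<omega> \<in> space (sample_space N T) \<Longrightarrow> model_x sx rho (phi N T \<omega>) = model_x sx rho \<omega>"
  by (intro ext) (simp add: model_x_def phi_off flipj_def)

lemma tt_neg: "tau_tilde T rho (- tau) = - tau_tilde T rho tau"
  by (simp add: tau_tilde_def)

lemma my: "\<omega> \<in> space (sample_space N T) \<Longrightarrow> i < N \<Longrightarrow> t < T \<Longrightarrow>
  model_y T a b se sx psi rho (-tau) (phi N T \<omega>) i t
   = 2*a + 2*b*model_x sx rho \<omega> i t - model_y T a b se sx psi rho tau \<omega> i t"
  by (simp add: model_y_def model_mu_def Let_def mx tt_neg phi_on flipj_def idx_in algebra_simps)

lemma SSW_u_phi: "\<omega> \<in> space (sample_space N T) \<Longrightarrow> SSW_u N T (phi N T \<omega>) = SSW_u N T \<omega>"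
  by (simp add: SSW_u_def phi_off flipj_def)

lemma key: "\<omega> \<in> space (sample_space N T) \<Longrightarrow> N > 0 \<Longrightarrow> T > 0 \<Longrightarrow>
  reflp N T a b (model_x sx rho \<omega>) (model_y T a b se sx psi rho tau \<omega>)
     (model_y T a b se sx psi rho (-tau) (phi N T \<omega>))"
  by (unfold_locales) (simp_all add: my)

theorem theorem6:
  fixes e :: estimator and N T :: nat
    and al alt rt a b se sx psi rho tau :: real
  assumes "valid_estimator e"
    and "N \<ge> 3" and "T \<ge> 2"
    and "0 < al" and "al < 1" and "0 < alt" and "alt < 1"
    and "0 < rt" and "rt < 1"
    and "0 < se" and "0 < sx" and "0 < psi"
    and "0 \<le> rho" and "rho < 1"
    and "-1 < tau" and "tau < 1"
  shows "scaled_expected_length e N T al alt rt a b se sx psi rho (- tau)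
         = scaled_expected_length e N T al alt rt a b se sx psi rho tau"
proof -
  have N: "N > 0" and T: "T > 0" using assms by auto
  let ?M = "sample_space N T"
  let ?X = "\<lambda>\<omega>. model_x sx rho \<omega>"
  let ?Y = "\<lambda>tau \<omega>. model_y T a b se sx psi rho tau \<omega>"
  note K = key[OF _ N T, of _ a b sx rho se psi tau]
  have cov: "cov_J e N T c a b se sx psi rho (-tau) = cov_J e N T c a b se sx psi rho tau" for c
  proof -
    have "cov_J e N T c a b se sx psi rho (-tau)
        = measure ?M {\<omega> \<in> space ?M. in_J e N T c (?X (phi N T \<omega>)) (?Y (-tau) (phi N T \<omega>)) b}"
      unfolding cov_J_def by (rule measure_phi)
    also have "\<dots> = measure ?M {\<omega> \<in> space ?M. in_J e N T c (?X \<omega>) (?Y tau \<omega>) b}"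
      by (intro arg_cong[where f="measure ?M"] Collect_cong conj_cong refl)
         (simp add: mx reflp.in_J_y'[OF K])
    finally show ?thesis unfolding cov_J_def .
  qed
  have cs: "c_star e N T al alt rt a b se sx psi rho (-tau) = c_star e N T al alt rt a b se sx psi rho tau"
    unfolding c_star_def cov ..
  define base where "base = (\<lambda>tau \<omega>. (sig_eps_hat e N T (?X \<omega>) (?Y tau \<omega>) / se) * (SSW_u N T \<omega>) powr (-1/2))"
  define fac where "fac = (\<lambda>tau \<omega>. if event_B e N T alt (?X \<omega>) (?Y tau \<omega>)
                    then sqrt (w_hat e N T (?X \<omega>) (?Y tau \<omega>)) else 1)"
  have bphi: "base (-tau) (phi N T \<omega>) = base tau \<omega>" if "\<omega> \<in> space ?M" for \<omega>
    using that by (simp add: base_def mx SSW_u_phi reflp.sig_y'[OF K])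
  have fphi: "fac (-tau) (phi N T \<omega>) = fac tau \<omega>" if "\<omega> \<in> space ?M" for \<omega>
    unfolding fac_def mx[OF that] by (rule reflp.factor_y'[OF K[OF that]])
  have num: "integral\<^sup>L ?M (\<lambda>\<omega>. base (-tau) \<omega> * fac (-tau) \<omega>) = integral\<^sup>L ?M (\<lambda>\<omega>. base tau \<omega> * fac tau \<omega>)"
    by (subst integral_phi) (intro Bochner_Integration.integral_cong refl, simp add: bphi fphi)
  have den: "integral\<^sup>L ?M (base (-tau)) = integral\<^sup>L ?M (base tau)"
    by (subst integral_phi) (intro Bochner_Integration.integral_cong refl, simp add: bphi)
  have ex: "scaled_expected_length e N T al alt rt a b se sx psi rho t
     = (Phi_inv (1 - al / 2) / Phi_inv ((c_star e N T al alt rt a b se sx psi rho t + 1) / 2))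
        * (integral\<^sup>L ?M (\<lambda>\<omega>. base t \<omega> * fac t \<omega>) / integral\<^sup>L ?M (base t))" for t
    unfolding scaled_expected_length_def Let_def base_def fac_def ..
  show ?thesis unfolding ex cs num den ..
qed

end
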